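(* Let $x\in\mathbb{R}^n$. If $u\in\partial\|\cdot\|_{1,2}(Lx)$ (the subdifferential of $\|\cdot\|_{1,2}$ at $Lx$), then $P_{T_L^\perp}P_{T_z}u=0$.
   Context: Let $n,N\in\mathbb{N}$, let $G_1,\dots,G_N\subseteq\{1,\dots,n\}$ be nonempty groups, possibly overlapping, with $\bigcup_iG_i=\{1,\dots,n\}$, and weights $w_i>0$. $x_G$ is the subvector of $x$ indexed by $G$ (increasing order). Let $p=\sum_i|G_i|$, partition $\{1,\dots,p\}$ into consecutive blocks $J_i=\{\sum_{j<i}|G_j|+1,\dots,\sum_{j\le i}|G_j|\}$, and define $L\in\mathbb{R}^{p\times n}$ by $(Lx)_{J_i}=w_ix_{G_i}$. For $z\in\mathbb{R}^p$, $\|z\|_{1,2}=\sum_i\|z_{J_i}\|$ (Euclidean); $u\in\partial\|\cdot\|_{1,2}(z)$ iff $u_{J_i}=z_{J_i}/\|z_{J_i}\|$ when $z_{J_i}\ne0$ and $\|u_{J_i}\|\le1$ when $z_{J_i}=0$. For $x\in\mathbb{R}^n$: $\mathcal{I}_x=\{t:x_{G_t}\ne0\}$; $\mathcal{E}_x=\{1,\dots,n\}\setminus\bigcup_{t\notin\mathcal{I}_x}G_t$, $T_x=\{x':\mathrm{supp}(x')\subseteq\mathcal{E}_x\}$; $\mathcal{E}_z=\bigcup_{t\in\mathcal{I}_x}J_t$, $T_z=\{z':\mathrm{supp}(z')\subseteq\mathcal{E}_z\}$; $\mathcal{E}_L=\mathrm{supp}(LP_{T_x}\mathbf{1}_n)$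 with $\mathbf{1}_n$ the all-ones vector, $T_L=\{z':\mathrm{supp}(z')\subseteq\mathcal{E}_L\}$. $P_T$ is the orthogonal (coordinate) projection onto $T$ and $T^\perp$ its orthogonal complement. *)

theory Defs
  imports Complex_Main
begin

(* Vectors in R^n / R^p are functions nat => real, coordinates indexed 1..n / 1..p.
   Groups G 1 .. G N, weights w 1 .. w N. *)

definition offs :: "(nat \<Rightarrow> nat set) \<Rightarrow> nat \<Rightarrow> nat" where
  "offs G i = (\<Sum>j\<in>{1..<i}. card (G j))"

definition blk :: "(nat \<Rightarrow> nat set) \<Rightarrow> nat \<Rightarrow> nat set" where
  "blk G i = {offs G i + 1 .. offs G i + card (G i)}"

definition pdim :: "nat \<Rightarrow> (nat \<Rightarrow> nat set) \<Rightarrow> nat" where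
  "pdim N G = (\<Sum>i\<in>{1..N}. card (G i))"

definition Lop :: "nat \<Rightarrow> (nat \<Rightarrow> nat set) \<Rightarrow> (nat \<Rightarrow> real) \<Rightarrow> (nat \<Rightarrow> real) \<Rightarrow> (nat \<Rightarrow> real)" where
  "Lop N G w x = (\<lambda>k. \<Sum>i\<in>{1..N}. if k \<in> blk G i
      then w i * x (sorted_list_of_set (G i) ! (k - offs G i - 1)) else 0)"

definition blocknorm :: "(nat \<Rightarrow> nat set) \<Rightarrow> nat \<Rightarrow> (nat \<Rightarrow> real) \<Rightarrow> real" where
  "blocknorm G i z = sqrt (\<Sum>k\<in>blk G i. (z k)\<^sup>2)"

(* u \<in> \<partial>||.||_{1,2}(z), as characterised in the paper *)
definition in_subdiff_12 :: "nat \<Rightarrow> (nat \<Rightarrow> nat set) \<Rightarrow> (nat \<Rightarrow> real) \<Rightarrow> (nat \<Rightarrow> real) \<Rightarrow> bool" where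
  "in_subdiff_12 N G z u \<longleftrightarrow> (\<forall>i\<in>{1..N}.
      ((\<exists>k\<in>blk G i. z k \<noteq> 0) \<longrightarrow> (\<forall>k\<in>blk G i. u k = z k / blocknorm G i z)) \<and>
      ((\<forall>k\<in>blk G i. z k = 0) \<longrightarrow> blocknorm G i u \<le> 1))"

(* coordinate projection onto {v. supp v \<subseteq> S} *)
definition cproj :: "nat set \<Rightarrow> (nat \<Rightarrow> real) \<Rightarrow> (nat \<Rightarrow> real)" where
  "cproj S v = (\<lambda>k. if k \<in> S then v k else 0)"

definition Iset :: "nat \<Rightarrow> (nat \<Rightarrow> nat set) \<Rightarrow> (nat \<Rightarrow> real) \<Rightarrow> nat set" where
  "Iset N G x = {t\<in>{1..N}. \<exists>j\<in>G t. x j \<noteq> 0}"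

definition Exs :: "nat \<Rightarrow> nat \<Rightarrow> (nat \<Rightarrow> nat set) \<Rightarrow> (nat \<Rightarrow> real) \<Rightarrow> nat set" where
  "Exs n N G x = {1..n} - (\<Union>t\<in>{1..N} - Iset N G x. G t)"

definition Ezs :: "nat \<Rightarrow> (nat \<Rightarrow> nat set) \<Rightarrow> (nat \<Rightarrow> real) \<Rightarrow> nat set" where
  "Ezs N G x = (\<Union>t\<in>Iset N G x. blk G t)"

definition ELs :: "nat \<Rightarrow> nat \<Rightarrow> (nat \<Rightarrow> nat set) \<Rightarrow> (nat \<Rightarrow> real) \<Rightarrow> (nat \<Rightarrow> real) \<Rightarrow> nat set" where
  "ELs n N G w x = {k\<in>{1..pdim N G}. Lop N G w (cproj (Exs n N G x) (\<lambda>_. 1)) k \<noteq> 0}"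

end

theory Submission
  imports Defs
begin

lemma offs_le:
  assumes "1 \<le> i" "i < j"
  shows "offs G i + card (G i) \<le> offs G j"
proof -
  have "offs G i + card (G i) = (\<Sum>l\<in>{1..<Suc i}. card (G l))"
    unfolding offs_def using assms(1) by simp
  also have "\<dots> \<le> (\<Sum>l\<in>{1..<j}. card (G l))"
    by (rule sum_mono2) (use assms in auto)
  finally show ?thesis unfolding offs_def .
qed

lemma blk_disj:
  assumes "1 \<le> i" "1 \<le> j" "i \<noteq> j" "k \<in> blk G i"
  shows "k \<notin> blk G j"
proof
  assume "k \<in> blk G j"
  then show False using assms
  proof (cases "i < j")
    case True
    then show False using assms \<open>k \<in> blk G j\<close> offs_le[of i j G] by (auto simp: blk_def)
  next
    case False
    then have "j < i" using assms by auto
    then show False using assms \<open>k \<in> blk G j\<close> offs_le[of j i G] by (auto simp: blk_def)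
  qed
qed

lemma Lop_blk:
  assumes "t \<in> {1..N}" "k \<in> blk G t"
  shows "Lop N G w f k = w t * f (sorted_list_of_set (G t) ! (k - offs G t - 1))"
proof -
  have "Lop N G w f k = (\<Sum>i\<in>{1..N}. if k \<in> blk G i
      then w i * f (sorted_list_of_set (G i) ! (k - offs G i - 1)) else 0)"
    unfolding Lop_def by simp
  also have "\<dots> = (if k \<in> blk G t
      then w t * f (sorted_list_of_set (G t) ! (k - offs G t - 1)) else 0)"
  proof -
    have "(\<Sum>i\<in>{1..N}. if k \<in> blk G i
      then w i * f (sorted_list_of_set (G i) ! (k - offs G i - 1)) else 0)
      = (\<Sum>i\<in>{1..N}. if i = t
      then w i * f (sorted_list_of_set (G i) ! (k - offs G i - 1)) else 0)"
      apply (rule sum.cong[OF refl])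
      using assms blk_disj[of t _ k G] by auto
    then show ?thesis using assms by simp
  qed
  finally show ?thesis using assms by simp
qed

theorem lemmaA3:
  fixes n N :: nat and G :: "nat \<Rightarrow> nat set" and w :: "nat \<Rightarrow> real"
    and x u :: "nat \<Rightarrow> real"
  assumes "\<forall>i\<in>{1..N}. G i \<noteq> {} \<and> G i \<subseteq> {1..n}"
    and "(\<Union>i\<in>{1..N}. G i) = {1..n}"
    and "\<forall>i\<in>{1..N}. w i > 0"
    and "in_subdiff_12 N G (Lop N G w x) u"
  shows "cproj ({1..pdim N G} - ELs n N G w x) (cproj (Ezs N G x) u) = (\<lambda>_. 0)"
proof
  fix k
  show "cproj ({1..pdim N G} - ELs n N G w x) (cproj (Ezs N G x) u) k = 0"
  proof (cases "k \<in> {1..pdim N G} - ELs n N G w x \<and> k \<in> Ezs N G x")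
    case False
    then show ?thesis unfolding cproj_def by auto
  next
    case True
    then obtain t where t: "t \<in> Iset N G x" "k \<in> blk G t" unfolding Ezs_def by auto
    have tN: "t \<in> {1..N}" using t unfolding Iset_def by auto
    have fin: "finite (G t)" using assms(1) tN finite_subset by blast
    define m where "m = k - offs G t - 1"
    have mlt: "m < card (G t)" using t(2) unfolding m_def blk_def by auto
    define g where "g = sorted_list_of_set (G t) ! m"
    have gG: "g \<in> G t" unfolding g_def using mlt fin
      by (metis length_sorted_list_of_set nth_mem set_sorted_list_of_set)
    have "Lop N G w (cproj (Exs n N G x) (\<lambda>_. 1)) k = 0"
      using True unfolding ELs_def by auto
    hence "w t * cproj (Exs n N G x) (\<lambda>_. 1) g = 0"
      using Lop_blk[OF tN t(2)] unfolding g_def m_def by simp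
    moreover have "w t > 0" using assms(3) tN by blast
    ultimately have "g \<notin> Exs n N G x" unfolding cproj_def by (auto split: if_splits)
    moreover have "g \<in> {1..n}" using gG assms(1) tN by blast
    ultimately obtain s where s: "s \<in> {1..N} - Iset N G x" "g \<in> G s"
      unfolding Exs_def by auto
    have xg: "x g = 0" using s unfolding Iset_def by auto
    have zk: "Lop N G w x k = 0"
      using Lop_blk[OF tN t(2), of w x] xg unfolding g_def m_def by simp
    obtain j where j: "j \<in> G t" "x j \<noteq> 0" using t(1) unfolding Iset_def by auto
    obtain m' where m': "m' < card (G t)" "sorted_list_of_set (G t) ! m' = j"
      using j(1) fin by (metis in_set_conv_nth length_sorted_list_of_set set_sorted_list_of_set)
    define k' where "k' = offs G t + 1 + m'"
    have k'b: "k' \<in> blk G t" unfolding k'_def blk_def using m' by auto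
    have "Lop N G w x k' = w t * x j"
      using Lop_blk[OF tN k'b, of w x] m' unfolding k'_def by simp
    hence "Lop N G w x k' \<noteq> 0" using \<open>w t > 0\<close> j by auto
    hence "u k = Lop N G w x k / blocknorm G t (Lop N G w x)"
      using assms(4) tN t(2) k'b unfolding in_subdiff_12_def by blast
    hence "u k = 0" using zk by simp
    then show ?thesis unfolding cproj_def by simp
  qed
qed

end
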